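(* Let $\{a,b\}$ be a $2$-element generating set of a finite abelian group $G$, and assume $\mathrm{Cay}(G;a,b)$ has hamiltonian paths $P$ and $P'$ satisfying either of the following two (equivalent) conditions: (1) $|\delta_b(P)-\delta_a(P')|\le 1$; or (2) $\delta_b(P)+\delta_b(P')\in\{|G|,|G|-1,|G|-2\}$. Then $\mathrm{Cay}(G;a,b)$ has two arc-disjoint hamiltonian paths.
   Context: The Cayley digraph $\mathrm{Cay}(G;a,b)$ has vertex set $G$ and an arc from $v$ to $v+s$ for all $v\in G$, $s\in\{a,b\}$; an arc $(v,v+s)$ is called an $s$-edge. For a subdigraph $P$ and $s\in\{a,b\}$, $\delta_s(P)$ denotes the number of $s$-edges in $P$. A hamiltonian path is a directed path visiting every vertex exactly once; arc-disjoint means sharing no arc. *)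

theory Defs
  imports "HOL-Algebra.Algebra"
begin

definition cay_arc :: "('g, 'm) monoid_scheme \<Rightarrow> 'g \<Rightarrow> 'g \<Rightarrow> 'g \<times> 'g \<Rightarrow> bool" where
  "cay_arc G a b e \<longleftrightarrow> fst e \<in> carrier G \<and>
     (snd e = fst e \<otimes>\<^bsub>G\<^esub> a \<or> snd e = fst e \<otimes>\<^bsub>G\<^esub> b)"

definition path_arcs :: "'g list \<Rightarrow> ('g \<times> 'g) set" where
  "path_arcs vs = {(vs ! i, vs ! Suc i) | i. Suc i < length vs}"

definition is_ham_path :: "('g, 'm) monoid_scheme \<Rightarrow> 'g \<Rightarrow> 'g \<Rightarrow> 'g list \<Rightarrow> bool" where
  "is_ham_path G a b vs \<longleftrightarrow> distinct vs \<and> set vs = carrier G \<and>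
     (\<forall>e \<in> path_arcs vs. cay_arc G a b e)"

definition delta :: "('g, 'm) monoid_scheme \<Rightarrow> 'g \<Rightarrow> 'g list \<Rightarrow> nat" where
  "delta G s vs = card {e \<in> path_arcs vs. snd e = fst e \<otimes>\<^bsub>G\<^esub> s}"

end

theory Submission
  imports Defs
begin

locale cayd = comm_group G for G (structure) +
  fixes a b
  assumes aG: "a \<in> carrier G" and bG: "b \<in> carrier G" and ab: "a \<noteq> b"
    and fin: "finite (carrier G)" and gen: "generate G {a,b} = carrier G"
begin

definition "cc = a \<otimes> inv b"
definition "mm = ord cc"
definition "rr = (LEAST i::nat. 0 < i \<and> (\<exists>p::nat. a [^] i = cc [^] p))"
definition "ee = (SOME p::nat. p < mm \<and> a [^] rr = cc [^] p)"
definition "gel y (I::nat) (P::nat) = y \<otimes> a [^] I \<otimes> cc [^] P"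

lemma cG[simp]: "cc \<in> carrier G" unfolding cc_def using aG bG by simp

lemma c_ne: "cc \<noteq> \<one>"
proof
  assume "cc = \<one>"
  hence "a \<otimes> inv b \<otimes> b = b" using bG unfolding cc_def by simp
  hence "a = b" using aG bG by (simp add: m_assoc)
  thus False using ab by simp
qed

lemma m_ge2: "2 \<le> mm"
proof -
  have "mm \<ge> 1" unfolding mm_def using ord_ge_1[OF fin cG] .
  moreover have "mm \<noteq> 1" unfolding mm_def using ord_eq_1[OF cG] c_ne by simp
  ultimately show ?thesis by simp
qed

lemma c_pow_m[simp]: "cc [^] mm = \<one>" unfolding mm_def by simp

lemma c_pow_mod: "cc [^] (p::nat) = cc [^] (p mod mm)"
proof -
  have "cc [^] (mm * (p div mm)) \<otimes> cc [^] (p mod mm) = cc [^] (mm * (p div mm) + p mod mm)"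
    by (simp add: nat_pow_mult)
  also have "\<dots> = cc [^] p" by simp
  finally have 1: "cc [^] (mm * (p div mm)) \<otimes> cc [^] (p mod mm) = cc [^] p" .
  have "cc [^] (mm * (p div mm)) = \<one>" by (simp add: nat_pow_pow[symmetric])
  thus ?thesis using 1 by simp
qed

lemma c_pow_eq_iff: "cc [^] (p::nat) = cc [^] (q::nat) \<longleftrightarrow> p mod mm = q mod mm"
proof
  assume h: "cc [^] p = cc [^] q"
  have "int (ord cc) dvd (int q - int p)" using int_pow_eq[OF cG, of "int p" "int q"] h
    by (simp add: int_pow_int)
  hence "int mm dvd (int q - int p)" unfolding mm_def by simp
  hence "int q mod int mm = int p mod int mm" by (simp add: mod_eq_dvd_iff)
  hence "int (q mod mm) = int (p mod mm)" by (simp add: of_nat_mod)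
  thus "p mod mm = q mod mm" by simp
next
  assume "p mod mm = q mod mm"
  thus "cc [^] p = cc [^] q" using c_pow_mod[of p] c_pow_mod[of q] by simp
qed

lemma r_ex: "0 < ord a \<and> (\<exists>p::nat. a [^] ord a = cc [^] p)"
  using ord_ge_1[OF fin aG] aG by (auto intro: exI[of _ 0])

lemma r_prop: "0 < rr \<and> (\<exists>p::nat. a [^] rr = cc [^] p)"
  unfolding rr_def by (rule LeastI_ex) (use r_ex in blast)

lemma r_pos: "0 < rr" using r_prop by simp

lemma r_min: "0 < i \<Longrightarrow> i < rr \<Longrightarrow> a [^] (i::nat) \<noteq> cc [^] (p::nat)"
  unfolding rr_def using not_less_Least by blast

lemma e_prop: "ee < mm \<and> a [^] rr = cc [^] ee"
proof -
  obtain p::nat where "a [^] rr = cc [^] p" using r_prop by blast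
  hence "p mod mm < mm \<and> a [^] rr = cc [^] (p mod mm)" using m_ge2 c_pow_mod[of p] by simp
  thus ?thesis unfolding ee_def by (rule someI)
qed

lemma b_eq: "b = a \<otimes> cc [^] (mm - 1)"
proof -
  have "cc [^] (mm - 1) \<otimes> cc = \<one>"
    using m_ge2 nat_pow_Suc[of cc "mm - 1"] by (simp del: nat_pow_Suc)
  hence "a \<otimes> cc [^] (mm - 1) \<otimes> cc = a" using aG by (simp add: m_assoc)
  moreover have "b \<otimes> cc = a" unfolding cc_def using aG bG by (simp add: m_lcomm)
  ultimately have "b \<otimes> cc = a \<otimes> cc [^] (mm - 1) \<otimes> cc" by simp
  thus ?thesis using r_cancel[of cc b "a \<otimes> cc [^] (mm - 1)"] aG bG by simp
qed

lemma gel_closed[simp]: "y \<in> carrier G \<Longrightarrow> gel y I P \<in> carrier G"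
  unfolding gel_def using aG by simp

lemma gel_a: "y \<in> carrier G \<Longrightarrow> gel y I P \<otimes> a = gel y (Suc I) P"
  unfolding gel_def using aG by (simp add: m_ac)

lemma gel_c: "y \<in> carrier G \<Longrightarrow> gel y I P \<otimes> cc = gel y I (Suc P)"
  unfolding gel_def using aG by (simp add: m_ac)

lemma gel_cpow: "y \<in> carrier G \<Longrightarrow> gel y I P \<otimes> cc [^] (k::nat) = gel y I (P + k)"
  unfolding gel_def using aG by (simp add: m_assoc nat_pow_mult)

lemma gel_b: "y \<in> carrier G \<Longrightarrow> gel y I P \<otimes> b = gel y (Suc I) (P + (mm - 1))"
proof -
  assume y: "y \<in> carrier G"
  have "gel y I P \<otimes> b = gel y I P \<otimes> a \<otimes> cc [^] (mm - 1)"
    using y aG by (subst b_eq) (simp add: m_assoc)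
  thus ?thesis using y by (simp add: gel_a gel_cpow)
qed

lemma gel_apow: "y \<in> carrier G \<Longrightarrow> gel y I P \<otimes> a [^] (k::nat) = gel y (I + k) P"
proof (induction k)
  case 0 thus ?case by simp
next
  case (Suc k)
  have "gel y I P \<otimes> a [^] Suc k = gel y I P \<otimes> a [^] k \<otimes> a"
    using Suc.prems aG by (simp add: m_assoc)
  thus ?case using Suc gel_a by simp
qed

lemma gel_gel: "y \<in> carrier G \<Longrightarrow> gel (gel y I P) I' P' = gel y (I + I') (P + P')"
  using gel_apow gel_cpow by (simp add: gel_def[of "gel y I P"])

lemma gel_00[simp]: "y \<in> carrier G \<Longrightarrow> gel y 0 0 = y"
  unfolding gel_def by simp

lemma gel_modP: "gel y I P = gel y I (P mod mm)"
  unfolding gel_def using c_pow_mod by simp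

lemma canon: "y \<in> carrier G \<Longrightarrow> gel y I P = gel y (I mod rr) ((P + ee * (I div rr)) mod mm)"
proof -
  assume y: "y \<in> carrier G"
  have "a [^] I = a [^] (rr * (I div rr) + I mod rr)" by simp
  also have "\<dots> = a [^] (rr * (I div rr)) \<otimes> a [^] (I mod rr)"
    using aG by (simp add: nat_pow_mult)
  also have "\<dots> = (a [^] rr) [^] (I div rr) \<otimes> a [^] (I mod rr)"
    using aG by (simp add: nat_pow_pow)
  also have "\<dots> = cc [^] (ee * (I div rr)) \<otimes> a [^] (I mod rr)"
    using e_prop by (simp add: nat_pow_pow)
  finally have "a [^] I = cc [^] (ee * (I div rr)) \<otimes> a [^] (I mod rr)" .
  hence "gel y I P = y \<otimes> (cc [^] (ee * (I div rr)) \<otimes> a [^] (I mod rr)) \<otimes> cc [^] P"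
    unfolding gel_def by simp
  also have "\<dots> = gel y (I mod rr) P \<otimes> cc [^] (ee * (I div rr))"
    unfolding gel_def using y aG by (simp add: m_ac)
  also have "\<dots> = gel y (I mod rr) (P + ee * (I div rr))" using gel_cpow y by simp
  finally have "gel y I P = gel y (I mod rr) (P + ee * (I div rr))" .
  thus ?thesis using gel_modP[of y "I mod rr" "P + ee * (I div rr)"] by simp
qed

lemma gel_inj:
  assumes y: "y \<in> carrier G" and "i < rr" "i' < rr" "p < mm" "p' < mm"
    and eq: "gel y i p = gel y i' p'"
  shows "i = i' \<and> p = p'"
proof -
  have key: "i = i' \<and> p = p'" if "i' \<le> i" "i < rr" "p < mm" "p' < mm" "gel y i p = gel y i' p'" for i i' p p'
  proof -
    have "y \<otimes> (a [^] i \<otimes> cc [^] p) = y \<otimes> (a [^] i' \<otimes> cc [^] p')"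
      using that(5) y aG unfolding gel_def by (simp add: m_assoc)
    moreover have cl1: "a [^] i \<otimes> cc [^] p \<in> carrier G" "a [^] i' \<otimes> cc [^] p' \<in> carrier G"
      using aG by simp_all
    ultimately have e1: "a [^] i \<otimes> cc [^] p = a [^] i' \<otimes> cc [^] p'" using l_cancel y by blast
    have "a [^] i = a [^] i' \<otimes> a [^] (i - i')" using aG that(1) by (simp add: nat_pow_mult)
    hence "a [^] i' \<otimes> (a [^] (i - i') \<otimes> cc [^] p) = a [^] i' \<otimes> cc [^] p'"
      using e1 aG by (simp add: m_assoc)
    hence e2: "a [^] (i - i') \<otimes> cc [^] p = cc [^] p'" using aG by (simp add: l_cancel)
    have "a [^] (i - i') \<otimes> cc [^] p \<otimes> cc [^] (mm - p) = a [^] (i - i') \<otimes> cc [^] mm"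
      using aG that(3) by (simp add: m_assoc nat_pow_mult)
    hence "a [^] (i - i') = cc [^] p' \<otimes> cc [^] (mm - p)" using e2 aG by simp
    hence "a [^] (i - i') = cc [^] (p' + (mm - p))" by (simp add: nat_pow_mult)
    moreover have "i - i' < rr" using that(2) by simp
    ultimately have "i - i' = 0" using r_min[of "i - i'" "p' + (mm - p)"] by (cases "i - i' = 0") auto
    hence ii: "i = i'" using that by simp
    hence "cc [^] p = cc [^] p'" using e2 by simp
    thus ?thesis using ii that c_pow_eq_iff by simp
  qed
  show ?thesis
  proof (cases "i' \<le> i")
    case True thus ?thesis using key assms by blast
  next
    case False thus ?thesis using key[of i i' p' p] assms by simp
  qed
qed

lemma inv_pow_ord: "x \<in> carrier G \<Longrightarrow> inv x = x [^] (ord x - 1)"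
proof -
  assume x: "x \<in> carrier G"
  have "ord x \<ge> 1" using ord_ge_1[OF fin x] .
  hence "x [^] (ord x - 1) \<otimes> x = x [^] ord x"
    using nat_pow_Suc[of x "ord x - 1"] by (simp del: nat_pow_Suc)
  hence "x [^] (ord x - 1) \<otimes> x = \<one>" using x by simp
  thus ?thesis using inv_equality x by simp
qed

lemma gen_form: "g \<in> generate G {a,b} \<Longrightarrow> \<exists>I P. g = a [^] (I::nat) \<otimes> cc [^] (P::nat)"
proof (induction rule: generate.induct)
  case one
  show ?case by (rule exI[of _ 0], rule exI[of _ 0]) simp
next
  case (incl h)
  show ?case
  proof (cases "h = a")
    case True thus ?thesis using aG by (intro exI[of _ 1] exI[of _ 0]) simp
  next
    case False hence "h = b" using incl by simp
    thus ?thesis using b_eq aG by (intro exI[of _ 1] exI[of _ "mm - 1"]) simp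
  qed
next
  case (inv h)
  show ?case
  proof (cases "h = a")
    case True thus ?thesis using aG inv_pow_ord[OF aG] by (intro exI[of _ "ord a - 1"] exI[of _ 0]) simp
  next
    case False hence hb: "h = b" using inv by simp
    have "inv b = b [^] (ord b - 1)" using inv_pow_ord[OF bG] .
    also have "\<dots> = (a \<otimes> cc [^] (mm - 1)) [^] (ord b - 1)" using b_eq by simp
    also have "\<dots> = a [^] (ord b - 1) \<otimes> (cc [^] (mm - 1)) [^] (ord b - 1)"
      using aG by (simp add: nat_pow_distrib)
    also have "\<dots> = a [^] (ord b - 1) \<otimes> cc [^] ((mm - 1) * (ord b - 1))"
      by (simp add: nat_pow_pow)
    finally show ?thesis using hb by blast
  qed
next
  case (eng h1 h2)
  then obtain I P I' P' where "h1 = a [^] (I::nat) \<otimes> cc [^] (P::nat)" "h2 = a [^] (I'::nat) \<otimes> cc [^] (P'::nat)"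
    by blast
  hence "h1 \<otimes> h2 = (a [^] I \<otimes> a [^] I') \<otimes> (cc [^] P \<otimes> cc [^] P')"
    using aG by (simp add: m_ac)
  also have "\<dots> = a [^] (I + I') \<otimes> cc [^] (P + P')" using aG by (simp add: nat_pow_mult)
  finally show ?case by blast
qed

lemma coord_ex: "y \<in> carrier G \<Longrightarrow> u \<in> carrier G \<Longrightarrow> \<exists>i p. i < rr \<and> p < mm \<and> u = gel y i p"
proof -
  assume y: "y \<in> carrier G" and u: "u \<in> carrier G"
  have "inv y \<otimes> u \<in> generate G {a,b}" using gen y u by simp
  then obtain I P where e: "inv y \<otimes> u = a [^] (I::nat) \<otimes> cc [^] (P::nat)" using gen_form by blast
  have "u = y \<otimes> (inv y \<otimes> u)" using y u by (simp add: m_assoc[symmetric])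
  also have "\<dots> = gel y I P" unfolding gel_def using e y aG by (simp add: m_assoc)
  finally have "u = gel y (I mod rr) ((P + ee * (I div rr)) mod mm)" using canon[OF y, of I P] by (rule trans)
  moreover have "I mod rr < rr" "(P + ee * (I div rr)) mod mm < mm" using r_pos m_ge2 by simp_all
  ultimately show ?thesis by blast
qed

definition "coord y u = (THE ip. fst ip < rr \<and> snd ip < mm \<and> u = gel y (fst ip) (snd ip))"
definition "lev y u = fst (coord y u)"
definition "pos y u = snd (coord y u)"

lemma coord_gel: "y \<in> carrier G \<Longrightarrow> i < rr \<Longrightarrow> p < mm \<Longrightarrow> coord y (gel y i p) = (i, p)"
  unfolding coord_def
  apply (rule the_equality)
  using gel_inj by auto

lemma lev_pos: "y \<in> carrier G \<Longrightarrow> u \<in> carrier G \<Longrightarrow>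
   lev y u < rr \<and> pos y u < mm \<and> u = gel y (lev y u) (pos y u)"
  using coord_ex[of y u] coord_gel unfolding lev_def pos_def by auto

lemma lev_gel: "y \<in> carrier G \<Longrightarrow> lev y (gel y I P) = I mod rr"
  using canon[of y I P] coord_gel[of y "I mod rr" "(P + ee * (I div rr)) mod mm"] r_pos m_ge2
  unfolding lev_def by simp

lemma pos_gel: "y \<in> carrier G \<Longrightarrow> pos y (gel y I P) = (P + ee * (I div rr)) mod mm"
  using canon[of y I P] coord_gel[of y "I mod rr" "(P + ee * (I div rr)) mod mm"] r_pos m_ge2
  unfolding pos_def by simp

lemma card_G: "card (carrier G) = rr * mm"
proof -
  have "bij_betw (\<lambda>(i,p). gel \<one> i p) ({..<rr} \<times> {..<mm}) (carrier G)"
  proof (rule bij_betwI')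
    fix x y assume "x \<in> {..<rr} \<times> {..<mm}" "y \<in> {..<rr} \<times> {..<mm}"
    thus "((\<lambda>(i,p). gel \<one> i p) x = (\<lambda>(i,p). gel \<one> i p) y) = (x = y)"
      using gel_inj[of \<one>] by (cases x, cases y) auto
  next
    fix x assume "x \<in> {..<rr} \<times> {..<mm}"
    thus "(\<lambda>(i,p). gel \<one> i p) x \<in> carrier G" by (cases x) simp
  next
    fix u assume "u \<in> carrier G"
    then obtain i p where "i < rr" "p < mm" "u = gel \<one> i p" using coord_ex[of \<one> u] by auto
    thus "\<exists>x\<in>{..<rr} \<times> {..<mm}. u = (\<lambda>(i,p). gel \<one> i p) x" by auto
  qed
  hence "card (carrier G) = card ({..<rr} \<times> {..<mm})" by (simp add: bij_betw_same_card)
  thus ?thesis by (simp add: card_cartesian_product)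
qed

definition "blab y j L u = (if lev y u = 0 then pos y u \<le> (j::nat) else L (lev y u))"
definition "S y j L u = (if u = y then gel y 1 j else u \<otimes> (if blab y j L u then b else a))"
definition "hp y j L = map (\<lambda>t. (S y j L ^^ Suc t) y) [0..<rr*mm]"
definition "sig j p = (if p = 0 then j else if p \<le> j then p - 1 else (p::nat))"
definition "nbc L i = card {l \<in> {1..<i}. L l}"
definition "FF j k p = (sig j p + k * (mm - 1) + ee) mod mm"
definition "DD j k = inj_on (\<lambda>q. (FF j k ^^ q) 0) {..<mm}"

lemma lev_y[simp]: "y \<in> carrier G \<Longrightarrow> lev y y = 0"
  using lev_gel[of y 0 0] by simp

lemma pos_y[simp]: "y \<in> carrier G \<Longrightarrow> pos y y = 0"
  using pos_gel[of y 0 0] by simp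

lemma S_closed: "y \<in> carrier G \<Longrightarrow> u \<in> carrier G \<Longrightarrow> S y j L u \<in> carrier G"
  unfolding S_def using aG bG by simp

lemma iter_closed: "y \<in> carrier G \<Longrightarrow> u \<in> carrier G \<Longrightarrow> (S y j L ^^ t) u \<in> carrier G"
  by (induction t) (simp_all add: S_closed)

lemma lev_S: "y \<in> carrier G \<Longrightarrow> u \<in> carrier G \<Longrightarrow> lev y (S y j L u) = Suc (lev y u) mod rr"
proof -
  assume y: "y \<in> carrier G" and u: "u \<in> carrier G"
  have u': "u = gel y (lev y u) (pos y u)" using lev_pos[OF y u] by simp
  show ?thesis
  proof (cases "u = y")
    case True thus ?thesis using y lev_gel[OF y] by (simp add: S_def)
  next
    case False
    have "S y j L u = gel y (lev y u) (pos y u) \<otimes> (if blab y j L u then b else a)"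
      using False u' by (simp add: S_def)
    also have "\<dots> = (if blab y j L u then gel y (Suc (lev y u)) (pos y u + (mm - 1))
                    else gel y (Suc (lev y u)) (pos y u))"
      using y gel_a gel_b by simp
    finally show ?thesis using lev_gel[OF y] by simp
  qed
qed

lemma lev_iter: "y \<in> carrier G \<Longrightarrow> lev y ((S y j L ^^ t) y) = t mod rr"
proof (induction t)
  case 0 thus ?case by simp
next
  case (Suc t)
  thus ?case using lev_S[OF Suc.prems iter_closed[OF Suc.prems Suc.prems]]
    by (simp add: mod_Suc_eq)
qed

lemma gel_eq_y: "y \<in> carrier G \<Longrightarrow> p < mm \<Longrightarrow> gel y 0 p = y \<longleftrightarrow> p = 0"
  using gel_inj[of y 0 0 p 0] r_pos m_ge2 by auto

lemma S_lev0: "y \<in> carrier G \<Longrightarrow> p < mm \<Longrightarrow> S y j L (gel y 0 p) = gel y 1 (sig j p)"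
proof -
  assume y: "y \<in> carrier G" and p: "p < mm"
  show ?thesis
  proof (cases "p = 0")
    case True thus ?thesis using y by (simp add: S_def sig_def)
  next
    case False
    hence ne: "gel y 0 p \<noteq> y" using gel_eq_y[OF y p] by simp
    have lv: "lev y (gel y 0 p) = 0" "pos y (gel y 0 p) = p" using lev_gel[OF y] pos_gel[OF y] p by simp_all
    show ?thesis
    proof (cases "p \<le> j")
      case True
      have "S y j L (gel y 0 p) = gel y 1 (p + (mm - 1))"
        using ne lv True gel_b[OF y, of 0 p] by (simp add: S_def blab_def)
      also have "\<dots> = gel y 1 ((p + (mm - 1)) mod mm)" by (rule gel_modP)
      also have "(p + (mm - 1)) mod mm = p - 1"
      proof -
        have eq: "p + (mm - 1) = (p - 1) + mm" using False m_ge2 by simp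
        show ?thesis unfolding eq using p by simp
      qed
      finally show ?thesis using True False by (simp add: sig_def)
    next
      case False2: False
      have "S y j L (gel y 0 p) = gel y 1 p"
        using ne lv False2 gel_a[OF y, of 0 p] by (simp add: S_def blab_def)
      thus ?thesis using False False2 by (simp add: sig_def)
    qed
  qed
qed

lemma S_levi: "y \<in> carrier G \<Longrightarrow> u \<in> carrier G \<Longrightarrow> lev y u \<noteq> 0 \<Longrightarrow>
    S y j L u = u \<otimes> (if L (lev y u) then b else a)"
  unfolding S_def blab_def by auto

lemma nbc_1[simp]: "nbc L (Suc 0) = 0"
proof -
  have "{l \<in> {1..<Suc 0}. L l} = {}" by auto
  thus ?thesis unfolding nbc_def by (simp only: card.empty)
qed

lemma nbc_Suc: "1 \<le> i \<Longrightarrow> nbc L (Suc i) = nbc L i + (if L i then 1 else 0)"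
proof -
  assume i: "1 \<le> i"
  have "{l \<in> {1..<Suc i}. L l} = (if L i then insert i {l \<in> {1..<i}. L l} else {l \<in> {1..<i}. L l})"
    using i by (cases "L i") (auto simp: less_Suc_eq)
  thus ?thesis unfolding nbc_def by simp
qed

lemma iter_lev0: "y \<in> carrier G \<Longrightarrow> p < mm \<Longrightarrow> 1 \<le> i \<Longrightarrow> i \<le> rr \<Longrightarrow>
    (S y j L ^^ i) (gel y 0 p) = gel y i (sig j p + nbc L i * (mm - 1))"
proof (induction i)
  case 0 thus ?case by simp
next
  case (Suc i)
  show ?case
  proof (cases "i = 0")
    case True thus ?thesis using S_lev0[OF Suc.prems(1,2)] by simp
  next
    case False
    hence i1: "1 \<le> i" by simp
    have IH: "(S y j L ^^ i) (gel y 0 p) = gel y i (sig j p + nbc L i * (mm - 1))"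
      using Suc i1 by simp
    have lv: "lev y (gel y i (sig j p + nbc L i * (mm - 1))) = i"
      using lev_gel[OF Suc.prems(1)] Suc by simp
    have "(S y j L ^^ Suc i) (gel y 0 p) = S y j L (gel y i (sig j p + nbc L i * (mm - 1)))"
      using IH by simp
    also have "\<dots> = gel y i (sig j p + nbc L i * (mm - 1)) \<otimes> (if L i then b else a)"
      using S_levi[OF Suc.prems(1) gel_closed[OF Suc.prems(1)]] lv i1 by simp
    also have "\<dots> = gel y (Suc i) (sig j p + nbc L (Suc i) * (mm - 1))"
      using gel_a[OF Suc.prems(1)] gel_b[OF Suc.prems(1)] nbc_Suc[OF i1]
      by (simp add: algebra_simps)
    finally show ?thesis .
  qed
qed

lemma FF_lt: "FF j k p < mm" unfolding FF_def using m_ge2 by simp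

lemma S_rr: "y \<in> carrier G \<Longrightarrow> p < mm \<Longrightarrow> (S y j L ^^ rr) (gel y 0 p) = gel y 0 (FF j (nbc L rr) p)"
proof -
  assume y: "y \<in> carrier G" and p: "p < mm"
  have "(S y j L ^^ rr) (gel y 0 p) = gel y rr (sig j p + nbc L rr * (mm - 1))"
    using iter_lev0[OF y p, of rr] r_pos by simp
  also have "\<dots> = gel y 0 (FF j (nbc L rr) p)"
    using canon[OF y, of rr] r_pos unfolding FF_def by simp
  finally show ?thesis .
qed

lemma S_qr: "y \<in> carrier G \<Longrightarrow> (S y j L ^^ (q * rr)) y = gel y 0 ((FF j (nbc L rr) ^^ q) 0)"
proof (induction q)
  case 0 thus ?case by simp
next
  case (Suc q)
  have lt: "(FF j (nbc L rr) ^^ q) 0 < mm" using m_ge2 FF_lt by (cases q) auto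
  have "(S y j L ^^ (Suc q * rr)) y = (S y j L ^^ rr) ((S y j L ^^ (q * rr)) y)"
    by (simp add: funpow_add)
  also have "\<dots> = gel y 0 ((FF j (nbc L rr) ^^ Suc q) 0)"
    using Suc S_rr[OF Suc.prems lt] by simp
  finally show ?case .
qed

lemma mod_cancel: "x < mm \<Longrightarrow> x' < mm \<Longrightarrow> (x + K) mod mm = (x' + K) mod mm \<Longrightarrow> x = (x'::nat)"
proof -
  have key: "x = x'" if "x \<le> x'" "x' < mm" "(x + K) mod mm = (x' + K) mod mm" for x x' :: nat
  proof -
    have "mm dvd (x' + K) - (x + K)" using that mod_eq_dvd_iff_nat[of "x + K" "x' + K" mm] by simp
    hence "mm dvd x' - x" by simp
    moreover have "x' - x < mm" using that by simp
    ultimately have "x' - x = 0" using nat_dvd_not_less by (cases "x' - x = 0") auto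
    thus ?thesis using that by simp
  qed
  assume "x < mm" "x' < mm" "(x + K) mod mm = (x' + K) mod mm"
  thus ?thesis using key[of x x'] key[of x' x] by (cases "x \<le> x'") auto
qed

lemma sig_lt: "j < mm \<Longrightarrow> p < mm \<Longrightarrow> sig j p < mm"
  unfolding sig_def by auto

lemma sig_inj: "j < mm \<Longrightarrow> p < mm \<Longrightarrow> p' < mm \<Longrightarrow> sig j p = sig j p' \<Longrightarrow> p = p'"
  unfolding sig_def by (auto split: if_splits)

lemma FF_inj: "j < mm \<Longrightarrow> p < mm \<Longrightarrow> p' < mm \<Longrightarrow> FF j k p = FF j k p' \<Longrightarrow> p = p'"
proof -
  assume j: "j < mm" and p: "p < mm" and p': "p' < mm" and h: "FF j k p = FF j k p'"
  have "(sig j p + (k * (mm - 1) + ee)) mod mm = (sig j p' + (k * (mm - 1) + ee)) mod mm"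
    using h unfolding FF_def by (simp only: add.assoc)
  hence "sig j p = sig j p'" by (rule mod_cancel[OF sig_lt[OF j p] sig_lt[OF j p']])
  thus ?thesis by (rule sig_inj[OF j p p'])
qed

lemma FF_pow_lt: "(FF j k ^^ q) 0 < mm"
  using m_ge2 FF_lt by (cases q) auto

lemma iter_form: "y \<in> carrier G \<Longrightarrow>
  (S y j L ^^ t) y = (if t mod rr = 0 then gel y 0 ((FF j (nbc L rr) ^^ (t div rr)) 0)
     else gel y (t mod rr) (sig j ((FF j (nbc L rr) ^^ (t div rr)) 0) + nbc L (t mod rr) * (mm - 1)))"
proof -
  assume y: "y \<in> carrier G"
  have tt: "t mod rr + (t div rr) * rr = t" by simp
  have "(S y j L ^^ (t mod rr + (t div rr) * rr)) y = (S y j L ^^ (t mod rr)) ((S y j L ^^ ((t div rr) * rr)) y)"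
    by (simp only: funpow_add comp_apply)
  hence "(S y j L ^^ t) y = (S y j L ^^ (t mod rr)) ((S y j L ^^ ((t div rr) * rr)) y)" by (simp only: tt)
  also have "\<dots> = (S y j L ^^ (t mod rr)) (gel y 0 ((FF j (nbc L rr) ^^ (t div rr)) 0))"
    using S_qr[OF y] by simp
  finally have e: "(S y j L ^^ t) y = (S y j L ^^ (t mod rr)) (gel y 0 ((FF j (nbc L rr) ^^ (t div rr)) 0))" .
  show ?thesis
  proof (cases "t mod rr = 0")
    case True thus ?thesis using e by simp
  next
    case False
    thus ?thesis using e iter_lev0[OF y FF_pow_lt, where i="t mod rr" and j=j and L=L] r_pos by simp
  qed
qed

lemma pos_iter: "y \<in> carrier G \<Longrightarrow>
  pos y ((S y j L ^^ t) y) = (if t mod rr = 0 then (FF j (nbc L rr) ^^ (t div rr)) 0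
     else (sig j ((FF j (nbc L rr) ^^ (t div rr)) 0) + nbc L (t mod rr) * (mm - 1)) mod mm)"
  using iter_form[of y, where j=j and L=L and t=t] pos_gel[of y] r_pos FF_pow_lt by simp

lemma iter_inj: "y \<in> carrier G \<Longrightarrow> j < mm \<Longrightarrow> DD j (nbc L rr) \<Longrightarrow>
   inj_on (\<lambda>t. (S y j L ^^ t) y) {..<rr*mm}"
proof (rule inj_onI)
  fix t t' assume y: "y \<in> carrier G" and j: "j < mm" and D: "DD j (nbc L rr)"
    and t: "t \<in> {..<rr*mm}" and t': "t' \<in> {..<rr*mm}"
    and eq: "(S y j L ^^ t) y = (S y j L ^^ t') y"
  let ?F = "FF j (nbc L rr)"
  have i: "t mod rr = t' mod rr" using lev_iter[OF y, where j=j and L=L and t=t] lev_iter[OF y, where j=j and L=L and t=t'] eq by simp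
  have "t < mm * rr" "t' < mm * rr" using t t' by (simp_all add: mult.commute)
  hence q: "t div rr < mm" "t' div rr < mm" by (simp_all add: less_mult_imp_div_less)
  have pe: "pos y ((S y j L ^^ t) y) = pos y ((S y j L ^^ t') y)" using eq by simp
  have "(?F ^^ (t div rr)) 0 = (?F ^^ (t' div rr)) 0"
  proof (cases "t mod rr = 0")
    case True thus ?thesis using pe i pos_iter[OF y, where j=j and L=L and t=t] pos_iter[OF y, where j=j and L=L and t=t'] by simp
  next
    case False
    hence "(sig j ((?F ^^ (t div rr)) 0) + nbc L (t mod rr) * (mm - 1)) mod mm =
           (sig j ((?F ^^ (t' div rr)) 0) + nbc L (t mod rr) * (mm - 1)) mod mm"
      using pe i pos_iter[OF y, where j=j and L=L and t=t] pos_iter[OF y, where j=j and L=L and t=t'] by simp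
    hence "sig j ((?F ^^ (t div rr)) 0) = sig j ((?F ^^ (t' div rr)) 0)"
      by (rule mod_cancel[OF sig_lt[OF j FF_pow_lt] sig_lt[OF j FF_pow_lt]])
    thus ?thesis by (rule sig_inj[OF j FF_pow_lt FF_pow_lt])
  qed
  hence "t div rr = t' div rr" using D q unfolding DD_def inj_on_def by blast
  moreover have "t = t div rr * rr + t mod rr" "t' = t' div rr * rr + t' mod rr" by simp_all
  ultimately show "t = t'" using i by simp
qed

lemma FF_mm: "j < mm \<Longrightarrow> DD j k \<Longrightarrow> (FF j k ^^ mm) 0 = 0"
proof -
  assume j: "j < mm" and D: "DD j k"
  let ?F = "FF j k"
  have "(\<lambda>q. (?F ^^ q) 0) ` {..<mm} \<subseteq> {..<mm}" using FF_pow_lt by auto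
  moreover have "card ((\<lambda>q. (?F ^^ q) 0) ` {..<mm}) = mm" using D unfolding DD_def by (simp add: card_image)
  ultimately have im: "(\<lambda>q. (?F ^^ q) 0) ` {..<mm} = {..<mm}"
    using card_subset_eq[OF finite_lessThan] by simp
  have "(?F ^^ mm) 0 \<in> (\<lambda>q. (?F ^^ q) 0) ` {..<mm}" using im FF_pow_lt[where j=j and k=k and q=mm] by simp
  then obtain q where q: "q < mm" "(?F ^^ mm) 0 = (?F ^^ q) 0" by auto
  show ?thesis
  proof (cases q)
    case 0 thus ?thesis using q by simp
  next
    case (Suc q')
    have s1: "Suc (mm - 1) = mm" using m_ge2 by simp
    have "?F ((?F ^^ (mm - 1)) 0) = (?F ^^ Suc (mm - 1)) 0" by simp
    also have "\<dots> = (?F ^^ mm) 0" by (simp only: s1)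
    also have "\<dots> = ?F ((?F ^^ q') 0)" using q Suc by simp
    finally have "?F ((?F ^^ (mm - 1)) 0) = ?F ((?F ^^ q') 0)" .
    hence "(?F ^^ (mm - 1)) 0 = (?F ^^ q') 0" using FF_inj[OF j FF_pow_lt FF_pow_lt] by blast
    hence "mm - 1 = q'" using D q Suc unfolding DD_def inj_on_def by auto
    thus ?thesis using q Suc by simp
  qed
qed

lemma Sn_y: "y \<in> carrier G \<Longrightarrow> j < mm \<Longrightarrow> DD j (nbc L rr) \<Longrightarrow> (S y j L ^^ (rr * mm)) y = y"
  using S_qr[of y, where j=j and L=L and q=mm] FF_mm[of j "nbc L rr"] by (simp add: mult.commute)

lemma hp_len[simp]: "length (hp y j L) = rr * mm" unfolding hp_def by simp

lemma hp_nth: "i < rr * mm \<Longrightarrow> hp y j L ! i = (S y j L ^^ Suc i) y" unfolding hp_def by simp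

lemma N_ge2: "2 \<le> rr * mm"
proof -
  have "1 * 2 \<le> rr * mm" using r_pos m_ge2 by (intro mult_le_mono) simp_all
  thus ?thesis by simp
qed

lemma a_ne_b_mult: "u \<in> carrier G \<Longrightarrow> u \<otimes> a \<noteq> u \<otimes> b"
  using ab aG bG l_cancel by blast

lemma hp_distinct: assumes y: "y \<in> carrier G" and j: "j < mm" and D: "DD j (nbc L rr)"
  shows "distinct (hp y j L)"
proof -
  let ?N = "rr * mm"
  have Sn: "(S y j L ^^ ?N) y = y" using Sn_y[OF y j D] .
  have md: "(S y j L ^^ Suc t) y = (S y j L ^^ (Suc t mod ?N)) y" if "t < ?N" for t
  proof (cases "Suc t = ?N")
    case True thus ?thesis using Sn by simp
  next
    case False thus ?thesis using that by simp
  qed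
  have "inj_on (\<lambda>t. (S y j L ^^ Suc t) y) {0..<?N}"
  proof (rule inj_onI)
    fix t t' assume t: "t \<in> {0..<?N}" and t': "t' \<in> {0..<?N}" and e: "(S y j L ^^ Suc t) y = (S y j L ^^ Suc t') y"
    hence "(S y j L ^^ (Suc t mod ?N)) y = (S y j L ^^ (Suc t' mod ?N)) y" using md by simp
    moreover have "Suc t mod ?N \<in> {..<?N}" "Suc t' mod ?N \<in> {..<?N}" using r_pos m_ge2 by simp_all
    ultimately have "Suc t mod ?N = Suc t' mod ?N" using iter_inj[OF y j D] unfolding inj_on_def by blast
    thus "t = t'" using t t' by (auto simp: mod_Suc split: if_splits)
  qed
  thus ?thesis unfolding hp_def by (simp add: distinct_map)
qed

lemma hp_set: assumes y: "y \<in> carrier G" and j: "j < mm" and D: "DD j (nbc L rr)"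
  shows "set (hp y j L) = carrier G"
proof -
  have sub: "set (hp y j L) \<subseteq> carrier G" unfolding hp_def
    by (auto intro!: S_closed[OF y] iter_closed[OF y y])
  have "card (set (hp y j L)) = rr * mm" using hp_distinct[OF y j D] distinct_card by fastforce
  thus ?thesis using card_subset_eq[OF fin sub] card_G by simp
qed

lemma hp_last: assumes y: "y \<in> carrier G" and j: "j < mm" and D: "DD j (nbc L rr)"
  shows "hp y j L ! (rr * mm - 1) = y"
proof -
  have s: "Suc (rr * mm - 1) = rr * mm" using N_ge2 by simp
  have "hp y j L ! (rr * mm - 1) = (S y j L ^^ Suc (rr * mm - 1)) y" using hp_nth[of "rr * mm - 1" y j L] N_ge2
    by (simp del: funpow.simps)
  also have "\<dots> = y" unfolding s using Sn_y[OF y j D] .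
  finally show ?thesis .
qed

lemma hp_ne_y: assumes y: "y \<in> carrier G" and j: "j < mm" and D: "DD j (nbc L rr)" and i: "Suc i < rr * mm"
  shows "hp y j L ! i \<noteq> y"
proof
  assume "hp y j L ! i = y"
  hence "hp y j L ! i = hp y j L ! (rr * mm - 1)" using hp_last[OF y j D] by simp
  hence "i = rr * mm - 1" using hp_distinct[OF y j D] i nth_eq_iff_index_eq[of "hp y j L" i "rr*mm - 1"] N_ge2
    by simp
  thus False using i by simp
qed

lemma hp_arcs: assumes y: "y \<in> carrier G" and j: "j < mm" and D: "DD j (nbc L rr)"
  shows "path_arcs (hp y j L) = {(u, S y j L u) | u. u \<in> carrier G \<and> u \<noteq> y}"
proof (rule equalityI; rule subsetI)
  fix e assume "e \<in> path_arcs (hp y j L)"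
  then obtain i where i: "Suc i < rr * mm" "e = (hp y j L ! i, hp y j L ! Suc i)"
    unfolding path_arcs_def by auto
  have "hp y j L ! Suc i = S y j L (hp y j L ! i)" using i hp_nth[of i y j L] hp_nth[of "Suc i" y j L] by simp
  moreover have "hp y j L ! i \<in> carrier G" using hp_set[OF y j D] i by (metis hp_len nth_mem Suc_lessD)
  ultimately show "e \<in> {(u, S y j L u) | u. u \<in> carrier G \<and> u \<noteq> y}"
    using hp_ne_y[OF y j D i(1)] i by auto
next
  fix e assume "e \<in> {(u, S y j L u) | u. u \<in> carrier G \<and> u \<noteq> y}"
  then obtain u where u: "u \<in> carrier G" "u \<noteq> y" "e = (u, S y j L u)" by auto
  then obtain i where i: "i < rr * mm" "hp y j L ! i = u" using hp_set[OF y j D]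
    by (metis hp_len in_set_conv_nth)
  have "i \<noteq> rr * mm - 1" using hp_last[OF y j D] i u by auto
  hence si: "Suc i < rr * mm" using i by simp
  have "hp y j L ! Suc i = S y j L u" using si i hp_nth[of i y j L] hp_nth[of "Suc i" y j L] by simp
  thus "e \<in> path_arcs (hp y j L)" unfolding path_arcs_def using si i u by auto
qed

lemma hp_ham: assumes y: "y \<in> carrier G" and j: "j < mm" and D: "DD j (nbc L rr)"
  shows "is_ham_path G a b (hp y j L)"
  unfolding is_ham_path_def
proof (intro conjI)
  show "distinct (hp y j L)" by (rule hp_distinct[OF y j D])
  show "set (hp y j L) = carrier G" by (rule hp_set[OF y j D])
  show "\<forall>e\<in>path_arcs (hp y j L). cay_arc G a b e"
    unfolding hp_arcs[OF y j D] cay_arc_def S_def by auto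
qed

lemma hp_DD: assumes y: "y \<in> carrier G" and j: "j < mm" and H: "is_ham_path G a b (hp y j L)"
  shows "DD j (nbc L rr)"
  unfolding DD_def
proof (rule inj_onI)
  let ?F = "FF j (nbc L rr)"
  fix q q' assume q: "q \<in> {..<mm}" and q': "q' \<in> {..<mm}" and e: "(?F ^^ q) 0 = (?F ^^ q') 0"
  have inj: "inj_on (\<lambda>t. (S y j L ^^ Suc t) y) {0..<rr*mm}"
    using H unfolding is_ham_path_def hp_def by (simp add: distinct_map)
  have e2: "(S y j L ^^ (Suc q * rr)) y = (S y j L ^^ (Suc q' * rr)) y"
    using S_qr[OF y, where j=j and L=L and q="Suc q"] S_qr[OF y, where j=j and L=L and q="Suc q'"] e by simp
  have b1: "Suc q * rr \<le> mm * rr" "Suc q' * rr \<le> mm * rr" using q q' by (intro mult_le_mono; simp)+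
  have s1: "Suc (Suc q * rr - 1) = Suc q * rr" "Suc (Suc q' * rr - 1) = Suc q' * rr" using r_pos by simp_all
  have "Suc q * rr - 1 \<in> {0..<rr*mm}" "Suc q' * rr - 1 \<in> {0..<rr*mm}" using b1 r_pos by (simp_all add: mult.commute)
  hence "Suc q * rr - 1 = Suc q' * rr - 1" using inj e2 s1 unfolding inj_on_def by metis
  hence "Suc q * rr = Suc q' * rr" using s1 by simp
  thus "q = q'" using r_pos by simp
qed

lemma delta_hp: assumes y: "y \<in> carrier G" and j: "j < mm" and D: "DD j (nbc L rr)"
  shows "delta G b (hp y j L) = card {u \<in> carrier G. u \<noteq> y \<and> blab y j L u}"
proof -
  have "{e \<in> path_arcs (hp y j L). snd e = fst e \<otimes> b} = (\<lambda>u. (u, S y j L u)) ` {u \<in> carrier G. u \<noteq> y \<and> blab y j L u}"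
    unfolding hp_arcs[OF y j D] using a_ne_b_mult a_ne_b_mult[symmetric] by (auto simp: S_def)
  moreover have "inj_on (\<lambda>u. (u, S y j L u)) {u \<in> carrier G. u \<noteq> y \<and> blab y j L u}"
    by (rule inj_onI) simp
  ultimately show ?thesis unfolding delta_def by (simp add: card_image)
qed

lemma count_blab: assumes y: "y \<in> carrier G" and j: "j < mm"
  shows "card {u \<in> carrier G. u \<noteq> y \<and> blab y j L u} = j + mm * nbc L rr"
proof -
  define Z where "Z = ({0::nat} \<times> {1..j}) \<union> ({l \<in> {1..<rr}. L l} \<times> {..<mm})"
  have Zsub: "Z \<subseteq> {..<rr} \<times> {..<mm}" unfolding Z_def using j r_pos by auto
  have eq: "{u \<in> carrier G. u \<noteq> y \<and> blab y j L u} = (\<lambda>(i,p). gel y i p) ` Z"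
  proof (rule equalityI; rule subsetI)
    fix u assume "u \<in> {u \<in> carrier G. u \<noteq> y \<and> blab y j L u}"
    hence u: "u \<in> carrier G" "u \<noteq> y" "blab y j L u" by auto
    have lp: "lev y u < rr" "pos y u < mm" "u = gel y (lev y u) (pos y u)" using lev_pos[OF y u(1)] by auto
    have "(lev y u, pos y u) \<in> Z"
    proof (cases "lev y u = 0")
      case True
      have "pos y u \<noteq> 0"
      proof
        assume "pos y u = 0"
        hence "u = y" using lp True y by simp
        thus False using u(2) by simp
      qed
      thus ?thesis using True u(3) unfolding Z_def blab_def by auto
    next
      case False thus ?thesis using u(3) lp unfolding Z_def blab_def by auto
    qed
    thus "u \<in> (\<lambda>(i,p). gel y i p) ` Z" using lp(3) by (auto intro: image_eqI[where x="(lev y u, pos y u)"])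
  next
    fix u assume "u \<in> (\<lambda>(i,p). gel y i p) ` Z"
    then obtain i p where ip: "(i,p) \<in> Z" "u = gel y i p" by auto
    have b: "i < rr" "p < mm" using ip Zsub by auto
    have lv: "lev y u = i" "pos y u = p" using ip b lev_gel[OF y] pos_gel[OF y] by simp_all
    show "u \<in> {u \<in> carrier G. u \<noteq> y \<and> blab y j L u}"
    proof (cases "i = 0")
      case True
      hence p: "1 \<le> p" "p \<le> j" using ip unfolding Z_def by auto
      hence "u \<noteq> y" using ip True gel_eq_y[OF y b(2)] by simp
      thus ?thesis using ip y lv True p unfolding blab_def by simp
    next
      case False
      hence "L i" using ip unfolding Z_def by auto
      moreover have "u \<noteq> y" using lv False y by auto
      ultimately show ?thesis using ip y lv False unfolding blab_def by simp
    qed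
  qed
  have inj: "inj_on (\<lambda>(i,p). gel y i p) Z"
  proof (rule inj_onI)
    fix x x' assume "x \<in> Z" "x' \<in> Z" "(\<lambda>(i,p). gel y i p) x = (\<lambda>(i,p). gel y i p) x'"
    thus "x = x'" using Zsub gel_inj[OF y] by (cases x, cases x') (simp, blast)
  qed
  have "card Z = j + nbc L rr * mm"
  proof -
    have "({0::nat} \<times> {1..j}) \<inter> ({l \<in> {1..<rr}. L l} \<times> {..<mm}) = {}" by auto
    hence "card Z = card ({0::nat} \<times> {1..j}) + card ({l \<in> {1..<rr}. L l} \<times> {..<mm})"
      unfolding Z_def by (intro card_Un_disjoint) auto
    thus ?thesis unfolding nbc_def by (simp add: card_cartesian_product)
  qed
  thus ?thesis using eq inj by (simp add: card_image mult.commute)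
qed

lemma delta_sum: assumes H: "is_ham_path G a b P"
  shows "delta G a P + delta G b P = card (carrier G) - 1"
proof -
  have dist: "distinct P" and st: "set P = carrier G" using H unfolding is_ham_path_def by auto
  have len: "length P = card (carrier G)" using dist st distinct_card by fastforce
  have pa: "path_arcs P = (\<lambda>i. (P ! i, P ! Suc i)) ` {i. Suc i < length P}"
    unfolding path_arcs_def by auto
  have inj: "inj_on (\<lambda>i. (P ! i, P ! Suc i)) {i. Suc i < length P}"
    by (rule inj_onI) (use dist nth_eq_iff_index_eq in auto)
  have ii: "{i. Suc i < length P} = {..<length P - 1}" by auto
  hence cpa: "card (path_arcs P) = card (carrier G) - 1" using pa inj len by (simp add: card_image)
  have fpa: "finite (path_arcs P)" using pa ii by simp
  let ?A = "{e \<in> path_arcs P. snd e = fst e \<otimes> a}" and ?B = "{e \<in> path_arcs P. snd e = fst e \<otimes> b}"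
  have un: "?A \<union> ?B = path_arcs P" using H unfolding is_ham_path_def cay_arc_def by auto
  have dj: "?A \<inter> ?B = {}" using H a_ne_b_mult unfolding is_ham_path_def cay_arc_def by fastforce
  have "card ?A + card ?B = card (path_arcs P)"
    using card_Un_disjoint[of ?A ?B] fpa un dj by simp
  thus ?thesis unfolding delta_def using cpa by simp
qed

lemma rc: "x \<otimes> z = w \<otimes> z \<Longrightarrow> x \<in> carrier G \<Longrightarrow> w \<in> carrier G \<Longrightarrow> z \<in> carrier G \<Longrightarrow> x = w"
  using r_cancel[of x z w] by blast

lemma lc: "z \<otimes> x = z \<otimes> w \<Longrightarrow> x \<in> carrier G \<Longrightarrow> w \<in> carrier G \<Longrightarrow> z \<in> carrier G \<Longrightarrow> x = w"
  using l_cancel[of z x w] by blast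

lemma cb: "cc \<otimes> b = a"
  unfolding cc_def using aG bG by (simp add: m_assoc)

lemma ham_structure:
  assumes H: "is_ham_path G a b P"
  shows "\<exists>j L. j < mm \<and> P = hp (last P) j L"
proof -
  have dist: "distinct P" and st: "set P = carrier G" and arcs: "\<forall>e\<in>path_arcs P. cay_arc G a b e"
    using H unfolding is_ham_path_def by auto
  have len: "length P = rr * mm" using dist st distinct_card card_G by fastforce
  define N where "N = rr * mm"
  have N2: "2 \<le> N" unfolding N_def by (rule N_ge2)
  have Pne: "P \<noteq> []" using len N2 N_def by auto
  define y where "y = last P"
  have yN: "y = P ! (N - 1)" unfolding y_def N_def using Pne len by (simp add: last_conv_nth)
  have Pin: "P ! t \<in> carrier G" if "t < N" for t
  proof -
    have "P ! t \<in> set P" using that len unfolding N_def by (intro nth_mem) simp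
    thus ?thesis using st by simp
  qed
  have y: "y \<in> carrier G" using Pin[of "N - 1"] yN N2 by simp
  have idx: "t = t'" if "t < N" "t' < N" "P ! t = P ! t'" for t t'
    using that nth_eq_iff_index_eq[OF dist] len unfolding N_def by simp
  have ney: "P ! t \<noteq> y" if "Suc t < N" for t
  proof
    assume "P ! t = y" hence "t = N - 1" using idx[of t "N - 1"] yN that by simp
    thus False using that by simp
  qed
  define isb where "isb u = (\<exists>t. Suc t < N \<and> P ! t = u \<and> P ! Suc t = u \<otimes> b)" for u
  have step: "P ! Suc t = P ! t \<otimes> (if isb (P ! t) then b else a)" if t: "Suc t < N" for t
  proof -
    have "(P ! t, P ! Suc t) \<in> path_arcs P" unfolding path_arcs_def using t len N_def by auto
    hence ab2: "P ! Suc t = P ! t \<otimes> a \<or> P ! Suc t = P ! t \<otimes> b" using arcs unfolding cay_arc_def by auto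
    show ?thesis
    proof (cases "P ! Suc t = P ! t \<otimes> b")
      case True thus ?thesis using t unfolding isb_def by auto
    next
      case False
      have "\<not> isb (P ! t)"
      proof
        assume "isb (P ! t)"
        then obtain t' where t': "Suc t' < N" "P ! t' = P ! t" "P ! Suc t' = P ! t \<otimes> b" unfolding isb_def by auto
        hence "t' = t" using idx t by simp
        thus False using t' False by simp
      qed
      thus ?thesis using ab2 False by simp
    qed
  qed
  have ex_idx: "\<exists>t. Suc t < N \<and> P ! t = u" if "u \<in> carrier G" "u \<noteq> y" for u
  proof -
    have "u \<in> set P" using that st by simp
    then obtain t where t: "t < N" "P ! t = u" using len unfolding N_def by (auto simp: in_set_conv_nth)
    have "t \<noteq> N - 1" using t that yN by auto
    thus ?thesis using t by (intro exI[of _ t]) simp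
  qed
  have C: "\<not> isb (u \<otimes> cc)" if u: "u \<in> carrier G" "u \<noteq> y" "u \<otimes> cc \<noteq> y" "\<not> isb u" for u
  proof
    assume ib: "isb (u \<otimes> cc)"
    then obtain t' where t': "Suc t' < N" "P ! t' = u \<otimes> cc" "P ! Suc t' = u \<otimes> cc \<otimes> b" unfolding isb_def by auto
    obtain t where t: "Suc t < N" "P ! t = u" using ex_idx u by blast
    have "P ! Suc t = u \<otimes> a" using step[OF t(1)] t u by simp
    moreover have "u \<otimes> cc \<otimes> b = u \<otimes> a" using u cb bG by (simp add: m_assoc)
    ultimately have "P ! Suc t = P ! Suc t'" using t' by simp
    hence "Suc t = Suc t'" using idx[of "Suc t" "Suc t'"] t t' by blast
    hence "u = u \<otimes> cc" using t t' by simp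
    hence "u \<otimes> \<one> = u \<otimes> cc" using u by simp
    hence "\<one> = cc" using lc u by simp
    thus False using c_ne by simp
  qed
  define L where "L i = isb (gel y i 0)" for i
  have gne: "gel y i p \<noteq> y" if "i mod rr \<noteq> 0" for i p
  proof
    assume "gel y i p = y" hence "lev y (gel y i p) = 0" using y by simp
    thus False using lev_gel[OF y] that by simp
  qed
  have propi: "\<not> isb (gel y i (p + d))" if "i mod rr \<noteq> 0" "\<not> isb (gel y i p)" for i p d
  proof (induction d)
    case 0 thus ?case using that by simp
  next
    case (Suc d)
    have "\<not> isb (gel y i (p + d) \<otimes> cc)" using C[OF gel_closed[OF y] gne[OF that(1)]] Suc gel_c[OF y] gne[OF that(1)]
      by simp
    thus ?case using gel_c[OF y] by simp
  qed
  have Li: "isb (gel y i p) \<longleftrightarrow> L i" if "i mod rr \<noteq> 0" for i p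
  proof
    assume ib: "isb (gel y i p)"
    show "L i"
    proof (rule ccontr)
      assume "\<not> L i"
      hence "\<not> isb (gel y i (0 + p))" using propi[OF that, of 0 p] unfolding L_def by simp
      thus False using ib by simp
    qed
  next
    assume l: "L i"
    show "isb (gel y i p)"
    proof (rule ccontr)
      assume nb: "\<not> isb (gel y i p)"
      have "gel y i p = gel y i (p mod mm)" by (rule gel_modP)
      hence "\<not> isb (gel y i (p mod mm + (mm - p mod mm)))" using propi[OF that, of "p mod mm" "mm - p mod mm"] nb
        by simp
      moreover have "p mod mm < mm" using m_ge2 by simp
      hence "p mod mm + (mm - p mod mm) = mm" by simp
      moreover have "gel y i mm = gel y i 0" using gel_modP[of y i mm] by simp
      ultimately show False using l unfolding L_def by simp
    qed
  qed
  have prop0: "\<not> isb (gel y 0 (p + d))" if "1 \<le> p" "p + d < mm" "\<not> isb (gel y 0 p)" for p d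
    using that(2)
  proof (induction d)
    case 0 thus ?case using that by simp
  next
    case (Suc d)
    have ne1: "gel y 0 (p + d) \<noteq> y" using gel_eq_y[OF y, of "p + d"] Suc.prems that(1) by simp
    have ne2: "gel y 0 (p + d) \<otimes> cc \<noteq> y" using gel_eq_y[OF y, of "Suc (p + d)"] Suc.prems that(1) gel_c[OF y] by simp
    have "\<not> isb (gel y 0 (p + d) \<otimes> cc)" using C[OF gel_closed[OF y] ne1 ne2] Suc by simp
    thus ?case using gel_c[OF y] by simp
  qed
  define B where "B = {p \<in> {1..<mm}. isb (gel y 0 p)}"
  define j where "j = (if B = {} then 0 else Max B)"
  have finB: "finite B" unfolding B_def by simp
  have j: "j < mm" unfolding j_def using finB m_ge2 by (auto simp: B_def)
  have L0: "isb (gel y 0 p) \<longleftrightarrow> p \<le> j" if "1 \<le> p" "p < mm" for p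
  proof
    assume "isb (gel y 0 p)"
    hence "p \<in> B" unfolding B_def using that by simp
    thus "p \<le> j" unfolding j_def using finB by auto
  next
    assume pj: "p \<le> j"
    hence Bne: "B \<noteq> {}" using that unfolding j_def by auto
    hence "j \<in> B" unfolding j_def using finB by simp
    hence ij: "isb (gel y 0 j)" unfolding B_def by simp
    show "isb (gel y 0 p)"
    proof (rule ccontr)
      assume "\<not> isb (gel y 0 p)"
      hence "\<not> isb (gel y 0 (p + (j - p)))" using prop0[OF that(1), of "j - p"] pj j by simp
      thus False using ij pj by simp
    qed
  qed
  have Bl: "isb u \<longleftrightarrow> blab y j L u" if u: "u \<in> carrier G" "u \<noteq> y" for u
  proof -
    have lp: "lev y u < rr" "pos y u < mm" "u = gel y (lev y u) (pos y u)" using lev_pos[OF y u(1)] by auto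
    show ?thesis
    proof (cases "lev y u = 0")
      case True
      have "pos y u \<noteq> 0"
      proof
        assume "pos y u = 0" hence "u = y" using lp True y by simp
        thus False using u by simp
      qed
      hence "1 \<le> pos y u" by simp
      thus ?thesis using L0[of "pos y u"] lp True unfolding blab_def by simp
    next
      case False
      thus ?thesis using Li[of "lev y u" "pos y u"] lp unfolding blab_def by simp
    qed
  qed
  have X: "P ! 0 = gel y 1 j"
  proof -
    have notsucc: "gel y 1 j \<noteq> P ! Suc t" if t: "Suc t < N" for t
    proof
      assume e: "gel y 1 j = P ! Suc t"
      let ?u = "P ! t"
      have u: "?u \<in> carrier G" "?u \<noteq> y" using Pin t ney by auto
      show False
      proof (cases "isb ?u")
        case True
        hence "?u \<otimes> b = gel y 1 j" using e step[OF t] by simp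
        moreover have "gel y 0 (Suc j) \<otimes> b = gel y 1 j"
        proof -
          have "gel y 0 (Suc j) \<otimes> b = gel y 1 (Suc j + (mm - 1))" using gel_b[OF y] by simp
          also have "\<dots> = gel y 1 ((Suc j + (mm - 1)) mod mm)" by (rule gel_modP)
          also have "Suc j + (mm - 1) = j + mm" using m_ge2 by simp
          finally show ?thesis using j gel_modP[of y 1 j] by simp
        qed
        ultimately have "?u \<otimes> b = gel y 0 (Suc j) \<otimes> b" by simp
        hence "?u = gel y 0 (Suc j)" by (rule rc[OF _ u(1) gel_closed[OF y] bG])
        show False
        proof (cases "Suc j = mm")
          case True
          hence "?u = y" using \<open>?u = gel y 0 (Suc j)\<close> gel_modP[of y 0 mm] y by simp
          thus False using u by simp
        next
          case False
          hence "isb (gel y 0 (Suc j)) \<longleftrightarrow> Suc j \<le> j" using L0[of "Suc j"] j by simp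
          thus False using \<open>isb ?u\<close> \<open>?u = gel y 0 (Suc j)\<close> by simp
        qed
      next
        case False
        hence "?u \<otimes> a = gel y 0 j \<otimes> a" using e step[OF t] gel_a[OF y, of 0 j] by simp
        hence uj: "?u = gel y 0 j" by (rule rc[OF _ u(1) gel_closed[OF y] aG])
        show False
        proof (cases "j = 0")
          case True thus False using uj u y by simp
        next
          case False
          hence "isb (gel y 0 j)" using L0[of j] j by simp
          thus False using uj \<open>\<not> isb ?u\<close> by simp
        qed
      qed
    qed
    have "gel y 1 j \<in> set P" using st gel_closed[OF y] by simp
    then obtain k where k: "k < N" "P ! k = gel y 1 j" using len unfolding N_def by (auto simp: in_set_conv_nth)
    have "k = 0"
    proof (rule ccontr)
      assume "k \<noteq> 0" then obtain t where "k = Suc t" by (cases k) auto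
      thus False using notsucc[of t] k by simp
    qed
    thus ?thesis using k by simp
  qed
  have Eq: "P ! t = (S y j L ^^ Suc t) y" if "t < N" for t
    using that
  proof (induction t)
    case 0 thus ?case using X by (simp add: S_def)
  next
    case (Suc t)
    have "P ! Suc t = P ! t \<otimes> (if isb (P ! t) then b else a)" using step Suc by simp
    also have "\<dots> = S y j L (P ! t)"
      using Bl[OF Pin ney] Suc.prems ney[OF Suc.prems] unfolding S_def by simp
    finally show ?case using Suc by simp
  qed
  have "P = hp y j L"
    by (rule nth_equalityI) (simp_all add: len hp_nth Eq N_def)
  hence "P = hp (last P) j L" unfolding y_def .
  thus ?thesis using j by blast
qed

lemma shift_c: assumes y: "y \<in> carrier G" and t: "t < mm" and u: "u \<in> carrier G"
  shows "lev (gel y 0 t) u = lev y u \<and> pos (gel y 0 t) u = (pos y u + (mm - t)) mod mm"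
proof -
  have lp: "lev y u < rr" "pos y u < mm" "u = gel y (lev y u) (pos y u)" using lev_pos[OF y u] by auto
  have "gel (gel y 0 t) (lev y u) (pos y u + (mm - t)) = gel y (lev y u) (t + (pos y u + (mm - t)))"
    using gel_gel[OF y] by simp
  also have "t + (pos y u + (mm - t)) = pos y u + mm" using t by simp
  also have "gel y (lev y u) (pos y u + mm) = gel y (lev y u) (pos y u)"
    using gel_modP[of y "lev y u" "pos y u + mm"] gel_modP[of y "lev y u" "pos y u"] by simp
  finally have e: "u = gel (gel y 0 t) (lev y u) (pos y u + (mm - t))" using lp by simp
  have y': "gel y 0 t \<in> carrier G" using y by simp
  show ?thesis using lev_gel[OF y', of "lev y u" "pos y u + (mm - t)"] pos_gel[OF y', of "lev y u" "pos y u + (mm - t)"]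
      lp e by simp
qed

lemma shift_a: assumes y: "y \<in> carrier G" and i0: "i0 < rr" and u: "u \<in> carrier G"
  shows "lev (gel y i0 0) u = (lev y u + (rr - i0)) mod rr"
proof -
  have lp: "lev y u < rr" "pos y u < mm" "u = gel y (lev y u) (pos y u)" using lev_pos[OF y u] by auto
  have "gel (gel y i0 0) (lev y u + (rr - i0)) (pos y u + (mm - ee)) = gel y (lev y u + rr) (pos y u + (mm - ee))"
    using gel_gel[OF y] i0 by simp
  also have "\<dots> = gel y ((lev y u + rr) mod rr) ((pos y u + (mm - ee) + ee * ((lev y u + rr) div rr)) mod mm)"
    by (rule canon[OF y])
  also have "(lev y u + rr) mod rr = lev y u" using lp by simp
  also have "(lev y u + rr) div rr = 1" using lp by simp
  also have "pos y u + (mm - ee) + ee * 1 = pos y u + mm" using e_prop by simp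
  also have "(pos y u + mm) mod mm = pos y u" using lp by simp
  finally have e: "u = gel (gel y i0 0) (lev y u + (rr - i0)) (pos y u + (mm - ee))" using lp by simp
  have y': "gel y i0 0 \<in> carrier G" using y by simp
  show ?thesis using lev_gel[OF y'] e by metis
qed

lemma pos_ne0: "y \<in> carrier G \<Longrightarrow> u \<in> carrier G \<Longrightarrow> u \<noteq> y \<Longrightarrow> lev y u = 0 \<Longrightarrow> pos y u \<noteq> 0"
proof
  assume y: "y \<in> carrier G" and u: "u \<in> carrier G" "u \<noteq> y" "lev y u = 0" and p: "pos y u = 0"
  have "u = gel y (lev y u) (pos y u)" using lev_pos[OF y u(1)] by simp
  hence "u = y" using u p y by simp
  thus False using u by simp
qed

lemma nbc_le: "nbc L rr \<le> rr - 1"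
proof -
  have "nbc L rr \<le> card {1..<rr}" unfolding nbc_def by (rule card_mono) auto
  thus ?thesis by simp
qed

lemma nbc_compl: "nbc (\<lambda>i. \<not> L i) rr + nbc L rr = rr - 1"
proof -
  have "card {l \<in> {1..<rr}. \<not> L l} + card {l \<in> {1..<rr}. L l} = card ({l \<in> {1..<rr}. \<not> L l} \<union> {l \<in> {1..<rr}. L l})"
    by (rule card_Un_disjoint[symmetric]) auto
  also have "{l \<in> {1..<rr}. \<not> L l} \<union> {l \<in> {1..<rr}. L l} = {1..<rr}" by auto
  finally show ?thesis unfolding nbc_def by simp
qed

lemma disj_crit:
  assumes y: "y \<in> carrier G" and y': "y' \<in> carrier G" and j1: "j1 < mm" and j2: "j2 < mm"
    and D1: "DD j1 (nbc L1 rr)" and D2: "DD j2 (nbc L2 rr)"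
    and C: "\<And>u. u \<in> carrier G \<Longrightarrow> u \<noteq> y \<Longrightarrow> u \<noteq> y' \<Longrightarrow> blab y j1 L1 u \<noteq> blab y' j2 L2 u"
  shows "path_arcs (hp y j1 L1) \<inter> path_arcs (hp y' j2 L2) = {}"
proof -
  { fix u assume u: "u \<in> carrier G" "u \<noteq> y" "u \<noteq> y'" and e: "S y j1 L1 u = S y' j2 L2 u"
    have "blab y j1 L1 u \<noteq> blab y' j2 L2 u" using C u by simp
    hence False using e u a_ne_b_mult[OF u(1)] unfolding S_def by (auto split: if_splits)
  }
  thus ?thesis unfolding hp_arcs[OF y j1 D1] hp_arcs[OF y' j2 D2] by blast
qed

lemma mod_cancel_gen: "x < n \<Longrightarrow> x' < n \<Longrightarrow> (x + K) mod n = (x' + K) mod n \<Longrightarrow> x = (x'::nat)"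
proof -
  have key: "x = x'" if "x \<le> x'" "x' < n" "(x + K) mod n = (x' + K) mod n" for x x' :: nat
  proof -
    have "n dvd (x' + K) - (x + K)" using that mod_eq_dvd_iff_nat[of "x + K" "x' + K" n] by simp
    hence "n dvd x' - x" by simp
    moreover have "x' - x < n" using that by simp
    ultimately have "x' - x = 0" using nat_dvd_not_less by (cases "x' - x = 0") auto
    thus ?thesis using that by simp
  qed
  assume "x < n" "x' < n" "(x + K) mod n = (x' + K) mod n"
  thus ?thesis using key[of x x'] key[of x' x] by (cases "x \<le> x'") auto
qed

lemma arith_cases:
  fixes j1 j2 k1 k2 :: nat
  assumes j1: "j1 < mm" and j2: "j2 < mm" and k1: "k1 \<le> rr - 1" and k2: "k2 \<le> rr - 1"
    and s: "j1 + mm * k1 + (j2 + mm * k2) \<in> {rr * mm, rr * mm - 1, rr * mm - 2}"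
  shows "(k1 + k2 + 1 = rr \<and> (j1 + j2 + 1 = mm \<or> j1 + j2 = mm \<or> j1 + j2 + 2 = mm))
       \<or> (k1 + k2 = rr \<and> j1 = 0 \<and> j2 = 0)
       \<or> (k1 + k2 + 2 = rr \<and> j1 + 1 = mm \<and> j2 + 1 = mm)"
proof -
  define K where "K = k1 + k2"
  define J where "J = j1 + j2"
  have sJ: "J + mm * K \<in> {rr * mm, rr * mm - 1, rr * mm - 2}" using s unfolding K_def J_def
    by (simp add: algebra_simps)
  have J: "J + 2 \<le> 2 * mm" using j1 j2 unfolding J_def by simp
  have m2: "2 \<le> mm" by (rule m_ge2)
  have Kle: "K \<le> 2 * rr - 2" using k1 k2 unfolding K_def by simp
  have R: "rr * mm = mm * rr" by simp
  consider (a) "K = rr" | (b) "K + 1 = rr" | (c) "K + 2 = rr" | (d) "K + 3 \<le> rr" | (e) "rr + 1 \<le> K"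
    by linarith
  thus ?thesis
  proof cases
    case a
    hence "J + mm * rr \<in> {mm * rr, mm * rr - 1, mm * rr - 2}" using sJ R by simp
    hence "J = 0" using m2 r_pos by (auto simp: nat_mult_le_cancel1)
    thus ?thesis using a unfolding K_def J_def by simp
  next
    case b
    hence "mm * rr = mm * K + mm" by (metis add.commute mult_Suc_right Suc_eq_plus1)
    hence "J + mm * K \<in> {mm * K + mm, mm * K + mm - 1, mm * K + mm - 2}" using sJ R by simp
    hence "J = mm \<or> J + 1 = mm \<or> J + 2 = mm" using m2 by auto
    thus ?thesis using b unfolding K_def J_def by auto
  next
    case c
    hence "mm * rr = mm * K + 2 * mm" by (simp add: algebra_simps flip: c)
    hence "J + mm * K \<in> {mm * K + 2 * mm, mm * K + 2 * mm - 1, mm * K + 2 * mm - 2}" using sJ R by simp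
    hence "J + 2 = 2 * mm" using m2 J by auto
    thus ?thesis using c j1 j2 unfolding K_def J_def by auto
  next
    case d
    then obtain d where "rr = K + 3 + d" by (metis le_add_diff_inverse)
    hence "mm * rr = mm * K + 3 * mm + mm * d" by (simp add: algebra_simps)
    hence "J + mm * K \<in> {mm * K + 3 * mm + mm * d, mm * K + 3 * mm + mm * d - 1, mm * K + 3 * mm + mm * d - 2}"
      using sJ R by simp
    hence False using J m2 by auto
    thus ?thesis ..
  next
    case e
    then obtain d where "K = rr + 1 + d" by (metis le_add_diff_inverse)
    hence "mm * K = mm * rr + mm + mm * d" by (simp add: algebra_simps)
    hence False using sJ R m2 by auto
    thus ?thesis ..
  qed
qed

lemma case_same:
  assumes y: "y \<in> carrier G" and j1: "j1 < mm" and j2: "j2 < mm" and t: "t < mm"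
    and D1: "DD j1 (nbc L1 rr)" and D2: "DD j2 k2" and k: "nbc L1 rr + k2 = rr - 1"
    and ar: "\<And>p. 1 \<le> p \<Longrightarrow> p < mm \<Longrightarrow> p \<noteq> t \<Longrightarrow> (p \<le> j1) \<noteq> ((p + (mm - t)) mod mm \<le> j2)"
  shows "\<exists>Q'. is_ham_path G a b Q' \<and> path_arcs (hp y j1 L1) \<inter> path_arcs Q' = {}"
proof -
  define L' where "L' i = (\<not> L1 i)" for i
  define y' where "y' = gel y 0 t"
  have y': "y' \<in> carrier G" unfolding y'_def using y by simp
  have "nbc L' rr = k2" using nbc_compl[of L1] k unfolding L'_def by simp
  hence D2': "DD j2 (nbc L' rr)" using D2 by simp
  have "path_arcs (hp y j1 L1) \<inter> path_arcs (hp y' j2 L') = {}"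
  proof (rule disj_crit[OF y y' j1 j2 D1 D2'])
    fix u assume u: "u \<in> carrier G" "u \<noteq> y" "u \<noteq> y'"
    have sc: "lev y' u = lev y u" "pos y' u = (pos y u + (mm - t)) mod mm"
      using shift_c[OF y t u(1)] unfolding y'_def by auto
    have lp: "lev y u < rr" "pos y u < mm" "u = gel y (lev y u) (pos y u)" using lev_pos[OF y u(1)] by auto
    show "blab y j1 L1 u \<noteq> blab y' j2 L' u"
    proof (cases "lev y u = 0")
      case True
      have p0: "pos y u \<noteq> 0" using pos_ne0[OF y u(1,2) True] .
      have pt: "pos y u \<noteq> t"
      proof
        assume "pos y u = t" hence "u = y'" using lp True unfolding y'_def by simp
        thus False using u by simp
      qed
      show ?thesis using ar[of "pos y u"] p0 pt lp sc True unfolding blab_def by simp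
    next
      case False
      thus ?thesis using sc unfolding blab_def L'_def by simp
    qed
  qed
  thus ?thesis using hp_ham[OF y' j2 D2'] by blast
qed

lemma rot_inv: "i < rr \<Longrightarrow> i0 < rr \<Longrightarrow> ((i + (rr - i0)) mod rr + i0) mod rr = i"
proof -
  assume i: "i < rr" and i0: "i0 < rr"
  have "((i + (rr - i0)) mod rr + i0) mod rr = (i + (rr - i0) + i0) mod rr" by (simp add: mod_add_left_eq)
  also have "i + (rr - i0) + i0 = i + rr" using i0 by simp
  finally show ?thesis using i by simp
qed

lemma rot_zero: "i < rr \<Longrightarrow> i0 < rr \<Longrightarrow> (i + (rr - i0)) mod rr = 0 \<longleftrightarrow> i = i0"
proof -
  assume i: "i < rr" and i0: "i0 < rr"
  show ?thesis
  proof (cases "i0 \<le> i")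
    case True
    have eq: "i + (rr - i0) = (i - i0) + rr" using i0 True by simp
    have "(i + (rr - i0)) mod rr = i - i0" unfolding eq using i by simp
    thus ?thesis using True by simp
  next
    case False
    hence "(i + (rr - i0)) mod rr = i + (rr - i0)" using i0 by simp
    thus ?thesis using False i0 by simp
  qed
qed

lemma nbc_rot:
  assumes i0: "1 \<le> i0" "i0 < rr"
  shows "nbc (\<lambda>i'. if (i' + i0) mod rr = 0 then V else \<not> L1 ((i' + i0) mod rr)) rr
       = card {i \<in> {..<rr}. i \<noteq> i0 \<and> (if i = 0 then V else \<not> L1 i)}"
proof -
  define g where "g i' = (i' + i0) mod rr" for i'
  define A where "A = {i' \<in> {1..<rr}. if g i' = 0 then V else \<not> L1 (g i')}"
  define T where "T = {i \<in> {..<rr}. i \<noteq> i0 \<and> (if i = 0 then V else \<not> L1 i)}"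
  have inj: "inj_on g A"
  proof (rule inj_onI)
    fix x x' assume "x \<in> A" "x' \<in> A" "g x = g x'"
    thus "x = x'" unfolding A_def g_def using mod_cancel_gen[of x rr x' i0] by auto
  qed
  have g0: "g x \<noteq> i0" if "x \<in> {1..<rr}" for x
  proof
    assume "g x = i0"
    hence "(x + i0) mod rr = (0 + i0) mod rr" unfolding g_def using i0 by simp
    hence "x = 0" using mod_cancel_gen[of x rr 0 i0] that i0 by simp
    thus False using that by simp
  qed
  have "g ` A = T"
  proof (rule equalityI; rule subsetI)
    fix i assume "i \<in> g ` A"
    then obtain x where x: "x \<in> A" "i = g x" by auto
    thus "i \<in> T" unfolding T_def using g0[of x] r_pos unfolding A_def by (auto simp: g_def)
  next
    fix i assume iT: "i \<in> T"
    define x where "x = (i + (rr - i0)) mod rr"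
    have gx: "g x = i" unfolding g_def x_def using rot_inv iT i0 unfolding T_def by simp
    have "x \<noteq> 0" unfolding x_def using rot_zero[of i i0] iT i0 unfolding T_def by simp
    moreover have "x < rr" unfolding x_def using r_pos by simp
    ultimately have "x \<in> A" unfolding A_def using gx iT unfolding T_def by auto
    thus "i \<in> g ` A" using gx by (auto intro: image_eqI[where x=x])
  qed
  hence "card A = card T" using inj card_image by fastforce
  thus ?thesis unfolding nbc_def A_def T_def g_def by simp
qed

lemma case_diff:
  assumes y: "y \<in> carrier G" and j1: "j1 < mm" and j2: "j2 < mm" and i0: "1 \<le> i0" "i0 < rr"
    and D1: "DD j1 (nbc L1 rr)" and D2: "DD j2 k2"
    and k: "k2 = card {i \<in> {..<rr}. i \<noteq> i0 \<and> (if i = 0 then L1 i0 else \<not> L1 i)}"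
    and ar1: "\<And>p. 1 \<le> p \<Longrightarrow> p < mm \<Longrightarrow> (p \<le> j1) \<noteq> L1 i0"
    and ar2: "\<And>p. 1 \<le> p \<Longrightarrow> p < mm \<Longrightarrow> (p \<le> j2) \<noteq> L1 i0"
  shows "\<exists>Q'. is_ham_path G a b Q' \<and> path_arcs (hp y j1 L1) \<inter> path_arcs Q' = {}"
proof -
  define V where "V = L1 i0"
  define L' where "L' i' = (if (i' + i0) mod rr = 0 then V else \<not> L1 ((i' + i0) mod rr))" for i'
  define y' where "y' = gel y i0 0"
  have y': "y' \<in> carrier G" unfolding y'_def using y by simp
  have "nbc L' rr = k2" using nbc_rot[OF i0, of V L1] k unfolding L'_def V_def by simp
  hence D2': "DD j2 (nbc L' rr)" using D2 by simp
  have "path_arcs (hp y j1 L1) \<inter> path_arcs (hp y' j2 L') = {}"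
  proof (rule disj_crit[OF y y' j1 j2 D1 D2'])
    fix u assume u: "u \<in> carrier G" "u \<noteq> y" "u \<noteq> y'"
    have sl: "lev y' u = (lev y u + (rr - i0)) mod rr" using shift_a[OF y i0(2) u(1)] unfolding y'_def by simp
    have lp: "lev y u < rr" "pos y u < mm" using lev_pos[OF y u(1)] by auto
    have lp': "lev y' u < rr" "pos y' u < mm" using lev_pos[OF y' u(1)] by auto
    show "blab y j1 L1 u \<noteq> blab y' j2 L' u"
    proof (cases "lev y u = 0")
      case True
      have p0: "pos y u \<noteq> 0" using pos_ne0[OF y u(1,2) True] .
      have "lev y' u = rr - i0" using sl True i0 by simp
      moreover have "rr - i0 \<noteq> 0" "(rr - i0 + i0) mod rr = 0" using i0 by simp_all
      ultimately have "blab y' j2 L' u = V" unfolding blab_def L'_def by simp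
      thus ?thesis using ar1[of "pos y u"] p0 lp True unfolding blab_def V_def by simp
    next
      case False
      show ?thesis
      proof (cases "lev y u = i0")
        case True
        have "i0 + (rr - i0) = rr" using i0 by simp
        hence l0: "lev y' u = 0" using sl True by simp
        have p0: "pos y' u \<noteq> 0" using pos_ne0[OF y' u(1) u(3) l0] .
        have "blab y j1 L1 u = V" using True False unfolding blab_def V_def by simp
        thus ?thesis using ar2[of "pos y' u"] p0 lp' l0 unfolding blab_def V_def by simp
      next
        case False2: False
        have l0: "lev y' u \<noteq> 0" using sl rot_zero[of "lev y u" i0] lp i0 False2 by simp
        have "(lev y' u + i0) mod rr = lev y u" using sl rot_inv[of "lev y u" i0] lp i0 by simp
        thus ?thesis using False l0 unfolding blab_def L'_def by simp
      qed
    qed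
  qed
  thus ?thesis using hp_ham[OF y' j2 D2'] by blast
qed

lemma modsub: "p < mm \<Longrightarrow> t < mm \<Longrightarrow> (p + (mm - t)) mod mm = (if t \<le> p then p - t else p + mm - t)"
proof -
  assume p: "p < mm" and t: "t < mm"
  show ?thesis
  proof (cases "t \<le> p")
    case True
    have eq: "p + (mm - t) = (p - t) + mm" using True t by simp
    have "(p + (mm - t)) mod mm = p - t" unfolding eq using p by simp
    thus ?thesis using True by simp
  next
    case False thus ?thesis using t by simp
  qed
qed

lemma ham_last: "is_ham_path G a b P \<Longrightarrow> last P \<in> carrier G"
proof -
  assume H: "is_ham_path G a b P"
  hence st: "set P = carrier G" unfolding is_ham_path_def by simp
  have "P \<noteq> []" using st by auto
  thus ?thesis using st last_in_set by blast
qed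

lemma main_loc:
  assumes H: "is_ham_path G a b P" and H': "is_ham_path G a b P'"
    and s: "delta G b P + delta G b P' \<in> {card (carrier G), card (carrier G) - 1, card (carrier G) - 2}"
  shows "\<exists>Q Q'. is_ham_path G a b Q \<and> is_ham_path G a b Q' \<and> path_arcs Q \<inter> path_arcs Q' = {}"
proof -
  obtain j1 L1 where j1: "j1 < mm" and P: "P = hp (last P) j1 L1" using ham_structure[OF H] by blast
  obtain j2 L2 where j2: "j2 < mm" and P': "P' = hp (last P') j2 L2" using ham_structure[OF H'] by blast
  define y where "y = last P"
  define y2 where "y2 = last P'"
  have y: "y \<in> carrier G" unfolding y_def by (rule ham_last[OF H])
  have y2: "y2 \<in> carrier G" unfolding y2_def by (rule ham_last[OF H'])
  have P1: "P = hp y j1 L1" using P unfolding y_def .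
  have P2: "P' = hp y2 j2 L2" using P' unfolding y2_def .
  have D1: "DD j1 (nbc L1 rr)" using hp_DD[OF y j1] H P1 by simp
  have D2: "DD j2 (nbc L2 rr)" using hp_DD[OF y2 j2] H' P2 by simp
  define k1 where "k1 = nbc L1 rr"
  define k2 where "k2 = nbc L2 rr"
  have d1: "delta G b P = j1 + mm * k1" unfolding k1_def P1 using delta_hp[OF y j1 D1] count_blab[OF y j1] by simp
  have d2: "delta G b P' = j2 + mm * k2" unfolding k2_def P2 using delta_hp[OF y2 j2 D2] count_blab[OF y2 j2] by simp
  have k1le: "k1 \<le> rr - 1" and k2le: "k2 \<le> rr - 1" unfolding k1_def k2_def by (rule nbc_le)+
  have sm: "j1 + mm * k1 + (j2 + mm * k2) \<in> {rr * mm, rr * mm - 1, rr * mm - 2}" using s d1 d2 card_G by simp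
  have D2k: "DD j2 k2" using D2 unfolding k2_def .
  have compl: "nbc (\<lambda>i. \<not> L1 i) rr = rr - 1 - k1" using nbc_compl[of L1] unfolding k1_def by simp
  have "\<exists>Q'. is_ham_path G a b Q' \<and> path_arcs (hp y j1 L1) \<inter> path_arcs Q' = {}"
  proof -
    consider (A) "k1 + k2 + 1 = rr" "j1 + j2 + 1 = mm" | (B) "k1 + k2 + 1 = rr" "j1 + j2 = mm"
      | (C) "k1 + k2 + 1 = rr" "j1 + j2 + 2 = mm" | (D) "k1 + k2 = rr" "j1 = 0" "j2 = 0"
      | (E) "k1 + k2 + 2 = rr" "j1 + 1 = mm" "j2 + 1 = mm"
      using arith_cases[OF j1 j2 k1le k2le sm] by blast
    thus ?thesis
    proof cases
      case A
      show ?thesis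
      proof (rule case_same[OF y j1 j2 j1 D1 D2k])
        show "nbc L1 rr + k2 = rr - 1" using A unfolding k1_def by simp
        fix p assume "1 \<le> p" "p < mm" "p \<noteq> j1"
        thus "(p \<le> j1) \<noteq> ((p + (mm - j1)) mod mm \<le> j2)" using modsub[of p j1] j1 A by auto
      qed
    next
      case B
      show ?thesis
      proof (rule case_same[OF y j1 j2 j1 D1 D2k])
        show "nbc L1 rr + k2 = rr - 1" using B unfolding k1_def by simp
        fix p assume "1 \<le> p" "p < mm" "p \<noteq> j1"
        thus "(p \<le> j1) \<noteq> ((p + (mm - j1)) mod mm \<le> j2)" using modsub[of p j1] j1 B by auto
      qed
    next
      case C
      have t: "j1 + 1 < mm" using C by simp
      show ?thesis
      proof (rule case_same[OF y j1 j2 t D1 D2k])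
        show "nbc L1 rr + k2 = rr - 1" using C unfolding k1_def by simp
        fix p assume "1 \<le> p" "p < mm" "p \<noteq> j1 + 1"
        thus "(p \<le> j1) \<noteq> ((p + (mm - (j1 + 1))) mod mm \<le> j2)" using modsub[of p "j1 + 1"] t C by auto
      qed
    next
      case D
      have "k1 \<noteq> 0" using D k2le r_pos by simp
      hence "{l \<in> {1..<rr}. L1 l} \<noteq> {}" unfolding k1_def nbc_def by auto
      then obtain i0 where i0: "1 \<le> i0" "i0 < rr" "L1 i0" by auto
      have set: "{i \<in> {..<rr}. i \<noteq> i0 \<and> (if i = 0 then L1 i0 else \<not> L1 i)} = insert 0 {i \<in> {1..<rr}. \<not> L1 i}"
        using i0 r_pos by auto
      have "card (insert 0 {i \<in> {1..<rr}. \<not> L1 i}) = Suc (nbc (\<lambda>i. \<not> L1 i) rr)"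
        unfolding nbc_def by simp
      hence kk: "k2 = card {i \<in> {..<rr}. i \<noteq> i0 \<and> (if i = 0 then L1 i0 else \<not> L1 i)}"
        using set compl D k1le r_pos by simp
      show ?thesis
        by (rule case_diff[OF y j1 j2 i0(1,2) D1 D2k kk]) (use D i0 in simp_all)
    next
      case E
      have "nbc (\<lambda>i. \<not> L1 i) rr \<noteq> 0" using compl E by simp
      hence "{l \<in> {1..<rr}. \<not> L1 l} \<noteq> {}" unfolding nbc_def by auto
      then obtain i0 where i0: "1 \<le> i0" "i0 < rr" "\<not> L1 i0" by auto
      have set: "{i \<in> {..<rr}. i \<noteq> i0 \<and> (if i = 0 then L1 i0 else \<not> L1 i)} = {i \<in> {1..<rr}. \<not> L1 i} - {i0}"
        using i0 r_pos by auto
      have "card ({i \<in> {1..<rr}. \<not> L1 i} - {i0}) = nbc (\<lambda>i. \<not> L1 i) rr - 1"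
        unfolding nbc_def using i0 by simp
      hence kk: "k2 = card {i \<in> {..<rr}. i \<noteq> i0 \<and> (if i = 0 then L1 i0 else \<not> L1 i)}"
        using set compl E by simp
      show ?thesis
        by (rule case_diff[OF y j1 j2 i0(1,2) D1 D2k kk]) (use E i0 in simp_all)
    qed
  qed
  thus ?thesis using H P1 by metis
qed

end

theorem mainTheorem8:
  fixes G :: "('g, 'm) monoid_scheme" and a b :: 'g and P P' :: "'g list"
  assumes "comm_group G" and "finite (carrier G)"
    and "a \<in> carrier G" and "b \<in> carrier G" and "a \<noteq> b"
    and "generate G {a, b} = carrier G"
    and "is_ham_path G a b P" and "is_ham_path G a b P'"
    and "\<bar>int (delta G b P) - int (delta G a P')\<bar> \<le> 1
         \<or> delta G b P + delta G b P' \<in> {card (carrier G), card (carrier G) - 1, card (carrier G) - 2}"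
  shows "\<exists>Q Q'. is_ham_path G a b Q \<and> is_ham_path G a b Q' \<and> path_arcs Q \<inter> path_arcs Q' = {}"
proof -
  have C: "cayd G a b" unfolding cayd_def cayd_axioms_def using assms(1-6) by simp
  interpret cayd G a b by (rule C)
  have N2: "2 \<le> card (carrier G)" using card_G N_ge2 by simp
  have ds: "delta G a P' + delta G b P' = card (carrier G) - 1" by (rule delta_sum[OF assms(8)])
  have "delta G b P + delta G b P' \<in> {card (carrier G), card (carrier G) - 1, card (carrier G) - 2}"
  proof (cases "\<bar>int (delta G b P) - int (delta G a P')\<bar> \<le> 1")
    case True
    have "delta G b P + delta G b P' = card (carrier G) \<or> delta G b P + delta G b P' = card (carrier G) - 1
       \<or> delta G b P + delta G b P' = card (carrier G) - 2"
      using True ds N2 by arith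
    thus ?thesis by auto
  next
    case False thus ?thesis using assms(9) by simp
  qed
  thus ?thesis by (rule main_loc[OF assms(7,8)])
qed

end
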